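(* Let $f:\mathbb{R}^n\to\mathbb{R}\cup\{\infty\}$ be a proper lower semicontinuous function and let $\bar x\in\operatorname{dom} f$. Suppose that $0\in\partial_p f(\bar x)$ and that there exists a real number $c>0$ such that $$\langle z,w\rangle\ge c\|w\|^2\quad\text{for all } w\in\operatorname{dom} D(\partial f)(\bar x|0)\text{ and all } z\in D(\partial f)(\bar x|0)(w).$$ Then $\bar x$ is a strong local minimizer of $f$ with modulus $\kappa$ for every $\kappa\in(0,c)$. Moreover, $$\mathrm{QG}(f;\bar x)\ge \inf\Big\{\frac{\langle z,w\rangle}{\|w\|^2}\ \Big|\ z\in D(\partial f)(\bar x|0)(w),\ w\in\operatorname{dom} D(\partial f)(\bar x|0)\Big\},$$ with the convention $0/0=\infty$.
   Context: For $\Omega\subset\mathbb{R}^N$ and $\bar u\in\Omega$, the tangent (contingent) cone is $T_\Omega(\bar u)=\{v\mid \exists t_k\downarrow0,\ v_k\to v \text{ with } \bar u+t_kv_k\in\Omega\}$. The regular normal cone is $\widehat N_\Omega(\bar u)=T_\Omega(\bar u)^\circ$ (polar cone), and the limiting normal cone $N_\Omega(\bar u)$ is the set of limits of $v_k\in\widehat N_\Omega(u_k)$ with $u_k\to\bar u$, $u_k\in\Omega$. For a proper lsc $f$ and $\bar x\in\operatorname{dom} f$, the limiting subdifferential is $\partial f(\bar x)=\{v\mid (v,-1)\in N_{\operatorname{epi} f}(\bar x,f(\bar x))\}$, and the proximal subdifferential is $\partial_p f(\bar x)=\{v\mid \liminf_{x\to\bar x}\frac{f(x)-f(\bar x)-\langle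 v,x-\bar x\rangle}{\|x-\bar x\|^2}>-\infty\}$. For a set-valued map $F:\mathbb{R}^n\rightrightarrows\mathbb{R}^m$ and $(\bar x,\bar y)\in\operatorname{gph}F$, the graphical derivative is $DF(\bar x|\bar y)(w)=\{z\mid (w,z)\in T_{\operatorname{gph}F}(\bar x,\bar y)\}$; the subgradient graphical derivative is $D(\partial f)(\bar x|\bar v)$, and $\operatorname{dom} D(\partial f)(\bar x|0)=\{w\mid D(\partial f)(\bar x|0)(w)\ne\emptyset\}$. A point $\bar x\in\operatorname{dom} f$ is a strong local minimizer of $f$ with modulus $\kappa>0$ if there is $\gamma>0$ with $f(x)-f(\bar x)\ge\frac{\kappa}{2}\|x-\bar x\|^2$ for all $x$ with $\|x-\bar x\|\le\gamma$ (the quadratic growth condition). $\mathrm{QG}(f;\bar x)$ denotes the supremum of all $\kappa>0$ such that $\bar x$ is a strong local minimizer of $f$ with modulus $\kappa$. *)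

theory Defs
  imports "HOL-Analysis.Analysis" "HOL-Library.Extended_Real"
begin

definition proper_fun :: "('a \<Rightarrow> ereal) \<Rightarrow> bool" where
  "proper_fun f \<longleftrightarrow> (\<forall>x. f x \<noteq> -\<infinity>) \<and> (\<exists>x. f x \<noteq> \<infinity>)"

definition lsc_fun :: "('a::topological_space \<Rightarrow> ereal) \<Rightarrow> bool" where
  "lsc_fun f \<longleftrightarrow> (\<forall>x. f x \<le> Liminf (at x) f)"

definition effdom :: "('a \<Rightarrow> ereal) \<Rightarrow> 'a set" where
  "effdom f = {x. f x < \<infinity>}"

definition epi :: "('a \<Rightarrow> ereal) \<Rightarrow> ('a \<times> real) set" where
  "epi f = {(x, a). f x \<le> ereal a}"

definition tangent_cone :: "'a::real_normed_vector set \<Rightarrow> 'a \<Rightarrow> 'a set" where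
  "tangent_cone \<Omega> u = {v. \<exists>(t::nat \<Rightarrow> real) (vs::nat \<Rightarrow> 'a).
      (\<forall>k. t k > 0) \<and> t \<longlonglongrightarrow> 0 \<and> vs \<longlonglongrightarrow> v \<and> (\<forall>k. u + t k *\<^sub>R vs k \<in> \<Omega>)}"

definition polar_cone :: "'a::real_inner set \<Rightarrow> 'a set" where
  "polar_cone K = {v. \<forall>w\<in>K. inner v w \<le> 0}"

definition regular_normal_cone :: "'a::real_inner set \<Rightarrow> 'a \<Rightarrow> 'a set" where
  "regular_normal_cone \<Omega> u = polar_cone (tangent_cone \<Omega> u)"

definition limiting_normal_cone :: "'a::real_inner set \<Rightarrow> 'a \<Rightarrow> 'a set" where
  "limiting_normal_cone \<Omega> u = {v. \<exists>(us::nat \<Rightarrow> 'a) (vs::nat \<Rightarrow> 'a).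
      (\<forall>k. us k \<in> \<Omega> \<and> vs k \<in> regular_normal_cone \<Omega> (us k)) \<and>
      us \<longlonglongrightarrow> u \<and> vs \<longlonglongrightarrow> v}"

text \<open>Limiting subdifferential (meaningful for x in dom f).\<close>
definition limiting_subdiff :: "('a::real_inner \<Rightarrow> ereal) \<Rightarrow> 'a \<Rightarrow> 'a set" where
  "limiting_subdiff f x = {v. (v, -1) \<in> limiting_normal_cone (epi f) (x, real_of_ereal (f x))}"

definition proximal_subdiff :: "('a::real_inner \<Rightarrow> ereal) \<Rightarrow> 'a \<Rightarrow> 'a set" where
  "proximal_subdiff f xb = {v. Liminf (at xb)
      (\<lambda>x. (f x - f xb - ereal (inner v (x - xb))) / ereal ((norm (x - xb))\<^sup>2)) > -\<infinity>}"

definition graph_of :: "('a \<Rightarrow> 'b set) \<Rightarrow> ('a \<times> 'b) set" where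
  "graph_of F = {(x, y). y \<in> F x}"

definition graphical_derivative ::
  "('a::real_normed_vector \<Rightarrow> 'b::real_normed_vector set) \<Rightarrow> 'a \<Rightarrow> 'b \<Rightarrow> 'a \<Rightarrow> 'b set" where
  "graphical_derivative F x y w = {z. (w, z) \<in> tangent_cone (graph_of F) (x, y)}"

definition sv_dom :: "('a \<Rightarrow> 'b set) \<Rightarrow> 'a set" where
  "sv_dom G = {w. G w \<noteq> {}}"

definition strong_local_min :: "('a::real_normed_vector \<Rightarrow> ereal) \<Rightarrow> 'a \<Rightarrow> real \<Rightarrow> bool" where
  "strong_local_min f xb \<kappa> \<longleftrightarrow> xb \<in> effdom f \<and> \<kappa> > 0 \<and>
     (\<exists>\<gamma>>0. \<forall>x. norm (x - xb) \<le> \<gamma> \<longrightarrow> f x - f xb \<ge> ereal (\<kappa> / 2 * (norm (x - xb))\<^sup>2))"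

definition QG :: "('a::real_normed_vector \<Rightarrow> ereal) \<Rightarrow> 'a \<Rightarrow> ereal" where
  "QG f xb = Sup (ereal ` {\<kappa>. \<kappa> > 0 \<and> strong_local_min f xb \<kappa>})"

end

theory Submission
  imports Defs
begin


lemma prox_bound:
  fixes f :: "'a::real_inner \<Rightarrow> ereal"
  assumes pf: "proper_fun f" and xd: "xb \<in> effdom f" and p: "0 \<in> proximal_subdiff f xb"
  shows "\<exists>r>0. \<exists>\<delta>>0. \<forall>x. norm (x - xb) \<le> \<delta> \<longrightarrow>
           f x \<ge> ereal (real_of_ereal (f xb) - r / 2 * (norm (x - xb))\<^sup>2)"
proof -
  define g where "g = (\<lambda>x. (f x - f xb - ereal (inner 0 (x - xb))) / ereal ((norm (x - xb))\<^sup>2))"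
  have L: "Liminf (at xb) g > -\<infinity>" using p unfolding proximal_subdiff_def g_def by simp
  obtain M :: real where M: "ereal M < Liminf (at xb) g"
  proof (cases "Liminf (at xb) g")
    case (real r) then show ?thesis using that[of "r - 1"] by simp
  next
    case PInf then show ?thesis using that[of 0] by simp
  next
    case MInf then show ?thesis using L by simp
  qed
  have "\<forall>\<^sub>F x in at xb. ereal M < g x" using less_LiminfD[OF M] .
  then obtain d where d: "d > 0" and dP: "\<And>x. x \<noteq> xb \<and> dist x xb < d \<Longrightarrow> ereal M < g x"
    unfolding eventually_at by auto
  obtain b where b: "f xb = ereal b"
    using xd pf unfolding effdom_def proper_fun_def by (cases "f xb") auto
  define r where "r = 2 * (\<bar>M\<bar> + 1)"
  have "\<forall>x. norm (x - xb) \<le> d/2 \<longrightarrow> f x \<ge> ereal (real_of_ereal (f xb) - r / 2 * (norm (x - xb))\<^sup>2)"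
  proof (intro allI impI)
    fix x assume nx: "norm (x - xb) \<le> d/2"
    show "f x \<ge> ereal (real_of_ereal (f xb) - r / 2 * (norm (x - xb))\<^sup>2)"
    proof (cases "x = xb")
      case True then show ?thesis using b r_def by simp
    next
      case False
      have "dist x xb < d" using nx d by (simp add: dist_norm)
      then have Mg: "ereal M < g x" using dP False by auto
      show ?thesis
      proof (cases "f x")
        case (real y)
        have np: "(norm (x - xb))\<^sup>2 > 0" using False by simp
        have "g x = ereal ((y - b) / (norm (x - xb))\<^sup>2)"
          unfolding g_def using real b np by simp
        with Mg have "M < (y - b) / (norm (x - xb))\<^sup>2" by simp
        then have "M * (norm (x - xb))\<^sup>2 < y - b" using np by (simp add: field_simps)
        moreover have "- (\<bar>M\<bar> + 1) * (norm (x - xb))\<^sup>2 \<le> M * (norm (x - xb))\<^sup>2"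
          using np by (intro mult_right_mono) auto
        moreover have "r / 2 * (norm (x - xb))\<^sup>2 = (\<bar>M\<bar> + 1) * (norm (x - xb))\<^sup>2"
          by (simp add: r_def)
        ultimately have "b - r / 2 * (norm (x - xb))\<^sup>2 \<le> y" by linarith
        then show ?thesis using real b by simp
      next
        case PInf then show ?thesis by simp
      next
        case MInf then show ?thesis using pf unfolding proper_fun_def by simp
      qed
    qed
  qed
  moreover have "r > 0" "d/2 > 0" using d r_def by auto
  ultimately show ?thesis by blast
qed



lemma lsc_sublevel_closed:
  fixes f :: "'a::metric_space \<Rightarrow> ereal" and h :: "'a \<Rightarrow> real"
  assumes lsc: "lsc_fun f" and h: "continuous_on UNIV h"
  shows "closed {x. f x + ereal (h x) \<le> ereal a}"
  unfolding closed_def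
proof (subst open_subopen, intro ballI)
  fix x assume "x \<in> - {x. f x + ereal (h x) \<le> ereal a}"
  then have gt: "f x + ereal (h x) > ereal a" by auto
  obtain b where b1: "a - h x < b" and b2: "ereal b < f x"
  proof (cases "f x")
    case (real y)
    then show ?thesis using gt that[of "(a - h x + y)/2"] by auto
  next
    case PInf then show ?thesis using that[of "a - h x + 1"] by auto
  next
    case MInf then show ?thesis using gt by auto
  qed
  have e1: "\<forall>\<^sub>F y in at x. ereal b < f y"
    using less_LiminfD[of b "at x" f] lsc b2 unfolding lsc_fun_def
    by (meson order_less_le_trans)
  then have e1': "\<forall>\<^sub>F y in nhds x. ereal b < f y"
    unfolding eventually_at_filter using b2 by (auto elim: eventually_mono)
  have "isCont h x" using h continuous_on_eq_continuous_at by blast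
  then have hl: "(h \<longlongrightarrow> h x) (nhds x)" by (simp add: isCont_def tendsto_at_iff_tendsto_nhds)
  have pos: "b - (a - h x) > 0" using b1 by simp
  have e2: "\<forall>\<^sub>F y in nhds x. dist (h y) (h x) < b - (a - h x)"
    using tendstoD[OF hl pos] .
  have "\<forall>\<^sub>F y in nhds x. f y + ereal (h y) > ereal a"
    using e1' e2
  proof eventually_elim
    case (elim y)
    then have "h y > a - b" by (auto simp: dist_real_def)
    then have "ereal b + ereal (h y) > ereal a" by simp
    moreover have "ereal b + ereal (h y) \<le> f y + ereal (h y)"
      using elim by (intro add_right_mono) auto
    ultimately show ?case by (rule less_le_trans)
  qed
  then obtain S where "open S" "x \<in> S" "\<forall>y\<in>S. f y + ereal (h y) > ereal a"
    unfolding eventually_nhds by blast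
  then show "\<exists>T. open T \<and> x \<in> T \<and> T \<subseteq> - {x. f x + ereal (h x) \<le> ereal a}"
    by (intro exI[of _ S]) (auto simp: not_le)
qed

lemma lsc_min:
  fixes f :: "'a::metric_space \<Rightarrow> ereal" and h :: "'a \<Rightarrow> real"
  assumes lsc: "lsc_fun f" and h: "continuous_on UNIV h" and K: "compact K" "K \<noteq> {}"
  shows "\<exists>u\<in>K. \<forall>x\<in>K. f u + ereal (h u) \<le> f x + ereal (h x)"
proof -
  define \<psi> where "\<psi> = (\<lambda>x. f x + ereal (h x))"
  define m where "m = (INF x\<in>K. \<psi> x)"
  define S where "S = (\<lambda>a. {x. \<psi> x \<le> ereal a})"
  have "K \<inter> \<Inter> (S ` {a. m < ereal a}) \<noteq> {}"
  proof (rule compact_imp_fip[OF K(1)])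
    fix T assume "T \<in> S ` {a. m < ereal a}"
    then show "closed T" unfolding S_def \<psi>_def using lsc_sublevel_closed[OF lsc h] by auto
  next
    fix F' assume F': "finite F'" "F' \<subseteq> S ` {a. m < ereal a}"
    then obtain A where A: "A \<subseteq> {a. m < ereal a}" "finite A" "F' = S ` A"
      by (meson finite_subset_image)
    show "K \<inter> \<Inter> F' \<noteq> {}"
    proof (cases "A = {}")
      case True then show ?thesis using A K by auto
    next
      case False
      have "m < ereal (Min A)" using A Min_in[OF A(2) False] by auto
      then obtain x where x: "x \<in> K" "\<psi> x < ereal (Min A)"
        unfolding m_def INF_less_iff by blast
      have "x \<in> \<Inter> F'"
      proof
        fix T assume "T \<in> F'"
        then obtain a where "a \<in> A" "T = S a" using A by auto
        then have "Min A \<le> a" using A by auto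
        then show "x \<in> T" using x \<open>T = S a\<close> unfolding S_def
          by (metis less_imp_le mem_Collect_eq ereal_less_eq(3) order_trans)
      qed
      then show ?thesis using x by auto
    qed
  qed
  then obtain u where u: "u \<in> K" "\<And>a. m < ereal a \<Longrightarrow> \<psi> u \<le> ereal a"
    unfolding S_def by auto
  have "\<psi> u \<le> m"
    using u(2) by (metis ereal_dense2 not_le order.strict_trans)
  then have "\<forall>x\<in>K. \<psi> u \<le> \<psi> x"
    unfolding m_def by (auto intro: order_trans INF_lower)
  then show ?thesis using u(1) unfolding \<psi>_def by blast
qed



lemma diff_quot_limit:
  fixes h :: "'a::real_inner \<Rightarrow> real"
  assumes hd: "(h has_derivative (\<lambda>d. inner g d)) (at u)"
    and t: "\<And>k. t k > 0" "t \<longlonglongrightarrow> 0" and d: "ds \<longlonglongrightarrow> d"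
  shows "(\<lambda>k. (h (u + t k *\<^sub>R ds k) - h u) / t k) \<longlonglongrightarrow> inner g d"
proof -
  define \<epsilon> where "\<epsilon> = (\<lambda>y. if y = 0 then 0 else (h (u + y) - h u - inner g y) / norm y)"
  have "(\<lambda>y. norm (h (u + y) - h u - inner g y) / norm y) \<midarrow>0\<rightarrow> 0"
    using hd unfolding has_derivative_at by blast
  then have "(\<lambda>y. norm (\<epsilon> y)) \<midarrow>0\<rightarrow> 0"
    by (rule Lim_transform_eventually) (auto simp: \<epsilon>_def eventually_at_filter)
  then have "\<epsilon> \<midarrow>0\<rightarrow> 0" by (rule tendsto_norm_zero_cancel)
  then have ic: "isCont \<epsilon> 0" by (simp add: isCont_def \<epsilon>_def)
  have y0: "(\<lambda>k. t k *\<^sub>R ds k) \<longlonglongrightarrow> 0 *\<^sub>R d"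
    by (intro tendsto_intros t d)
  have "(\<lambda>k. \<epsilon> (t k *\<^sub>R ds k)) \<longlonglongrightarrow> \<epsilon> 0"
    using isCont_tendsto_compose[OF ic] y0 by simp
  then have e0: "(\<lambda>k. \<epsilon> (t k *\<^sub>R ds k)) \<longlonglongrightarrow> 0" by (simp add: \<epsilon>_def)
  have lim: "(\<lambda>k. inner g (ds k) + norm (ds k) * \<epsilon> (t k *\<^sub>R ds k)) \<longlonglongrightarrow> inner g d + norm d * 0"
    by (intro tendsto_intros d e0)
  have eq: "(h (u + t k *\<^sub>R ds k) - h u) / t k = inner g (ds k) + norm (ds k) * \<epsilon> (t k *\<^sub>R ds k)" for k
  proof -
    have tk: "t k > 0" using t by auto
    have "h (u + t k *\<^sub>R ds k) - h u = inner g (t k *\<^sub>R ds k) + norm (t k *\<^sub>R ds k) * \<epsilon> (t k *\<^sub>R ds k)"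
      by (cases "t k *\<^sub>R ds k = 0") (auto simp: \<epsilon>_def)
    also have "\<dots> = t k * (inner g (ds k) + norm (ds k) * \<epsilon> (t k *\<^sub>R ds k))"
      using tk by (simp add: algebra_simps)
    finally show ?thesis using tk by simp
  qed
  show ?thesis using lim unfolding eq by simp
qed

lemma local_min_subgrad:
  fixes f :: "'a::real_inner \<Rightarrow> ereal" and h :: "'a \<Rightarrow> real"
  assumes fu: "f u = ereal fu"
    and hd: "(h has_derivative (\<lambda>d. inner g d)) (at u)"
    and e: "e > 0" and lm: "\<forall>y. norm (y - u) < e \<longrightarrow> f u + ereal (h u) \<le> f y + ereal (h y)"
  shows "-g \<in> limiting_subdiff f u"
proof -
  have reg: "(-g, -1) \<in> regular_normal_cone (epi f) (u, fu)"
    unfolding regular_normal_cone_def polar_cone_def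
  proof (intro CollectI ballI)
    fix w assume "w \<in> tangent_cone (epi f) (u, fu)"
    then obtain t vs where t: "\<And>k. t k > 0" "t \<longlonglongrightarrow> 0" and vs: "vs \<longlonglongrightarrow> w"
      and mem: "\<And>k. (u, fu) + t k *\<^sub>R vs k \<in> epi f"
      unfolding tangent_cone_def by blast
    obtain d \<beta> where w: "w = (d, \<beta>)" by (cases w)
    define ds where "ds = (\<lambda>k. fst (vs k))"
    define bs where "bs = (\<lambda>k. snd (vs k))"
    have ds: "ds \<longlonglongrightarrow> d" unfolding ds_def using tendsto_fst[OF vs] w by simp
    have bs: "bs \<longlonglongrightarrow> \<beta>" unfolding bs_def using tendsto_snd[OF vs] w by simp
    have memk: "f (u + t k *\<^sub>R ds k) \<le> ereal (fu + t k * bs k)" for k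
      using mem[of k] unfolding epi_def ds_def bs_def by (cases "vs k") auto
    have y0: "(\<lambda>k. t k *\<^sub>R ds k) \<longlonglongrightarrow> 0 *\<^sub>R d" by (intro tendsto_intros t ds)
    then have y0': "(\<lambda>k. t k *\<^sub>R ds k) \<longlonglongrightarrow> 0" by simp
    have "\<forall>\<^sub>F k in sequentially. dist (t k *\<^sub>R ds k) 0 < e"
      using tendstoD[OF y0' e] .
    then have ev: "\<forall>\<^sub>F k in sequentially. 0 \<le> bs k + (h (u + t k *\<^sub>R ds k) - h u) / t k"
    proof eventually_elim
      case (elim k)
      have "f u + ereal (h u) \<le> f (u + t k *\<^sub>R ds k) + ereal (h (u + t k *\<^sub>R ds k))"
        using lm elim by (auto simp: dist_norm)
      also have "\<dots> \<le> ereal (fu + t k * bs k) + ereal (h (u + t k *\<^sub>R ds k))"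
        using memk[of k] by (intro add_right_mono) auto
      finally have "fu + h u \<le> fu + t k * bs k + h (u + t k *\<^sub>R ds k)" using fu by simp
      then have "0 \<le> t k * bs k + (h (u + t k *\<^sub>R ds k) - h u)" by simp
      then have "0 \<le> (t k * bs k + (h (u + t k *\<^sub>R ds k) - h u)) / t k"
        using t(1)[of k] by simp
      also have "\<dots> = bs k + (h (u + t k *\<^sub>R ds k) - h u) / t k"
        using t(1)[of k] by (simp add: field_simps)
      finally show ?case .
    qed
    have lim: "(\<lambda>k. bs k + (h (u + t k *\<^sub>R ds k) - h u) / t k) \<longlonglongrightarrow> \<beta> + inner g d"
      by (intro tendsto_intros bs diff_quot_limit[OF hd t ds])
    have "0 \<le> \<beta> + inner g d" using tendsto_lowerbound[OF lim ev] by simp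
    then show "inner (-g, -1) w \<le> 0" using w by (simp add: inner_Pair)
  qed
  have "(-g, -1) \<in> limiting_normal_cone (epi f) (u, fu)"
    unfolding limiting_normal_cone_def
    apply (rule CollectI)
    apply (rule exI[of _ "\<lambda>k. (u, fu)"], rule exI[of _ "\<lambda>k. (-g, -1)"])
    using reg fu by (auto simp: epi_def)
  then show ?thesis unfolding limiting_subdiff_def using fu by simp
qed



lemma step:
  fixes f :: "'a::euclidean_space \<Rightarrow> ereal"
  assumes pf: "proper_fun f" and lsc: "lsc_fun f" and fxb: "f xb = ereal fb"
    and bound: "\<forall>x. norm (x - xb) \<le> \<delta> \<longrightarrow> f x \<ge> ereal (fb - r / 2 * (norm (x - xb))\<^sup>2)"
    and r: "r > 0" and k: "0 < \<kappa>" "\<kappa> < \<kappa>'"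
    and Md: "M = (\<kappa>' - \<kappa>) / 2" and Rd: "R = (r + \<kappa>') / M + 1"
    and \<rho>: "\<rho> > 0" "R * \<rho> \<le> \<delta>"
    and x: "norm (x - xb) = \<rho>" "f x - f xb < ereal (\<kappa> / 2 * \<rho>\<^sup>2)"
  shows "\<exists>u v. v \<in> limiting_subdiff f u \<and> norm (u - xb) \<le> R * \<rho> \<and>
     (\<kappa>' - \<kappa>) / (2 * (r + \<kappa>')) * \<rho>\<^sup>2 \<le> (norm (u - xb))\<^sup>2 \<and>
     norm v \<le> (\<kappa>' * R + 2 * M * R ^ 3) * \<rho> \<and>
     inner v (u - xb) \<le> \<kappa>' * (norm (u - xb))\<^sup>2"
proof -
  have M: "M > 0" using Md k by simp
  have rk: "r + \<kappa>' > 0" using r k by simp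
  have R1: "R \<ge> 1" using Rd M rk by simp
  have MR: "M * R \<ge> r + \<kappa>'" using Rd M by (simp add: field_simps)
  have MR2: "M * R\<^sup>2 \<ge> r + \<kappa>'"
  proof -
    have "M * R \<le> M * R * R" using M R1 by simp
    then show ?thesis using MR by (simp add: power2_eq_square mult.assoc)
  qed
  define A where "A = - (\<kappa>' / 2)"
  define B where "B = M / (2 * \<rho>\<^sup>2)"
  define N where "N = (\<lambda>y. inner (y - xb) (y - xb))"
  define h where "h = (\<lambda>y. A * N y + B * (N y)\<^sup>2)"
  have N2: "N y = (norm (y - xb))\<^sup>2" for y unfolding N_def by (simp add: dot_square_norm)
  have hc: "continuous_on UNIV h" unfolding h_def N_def by (intro continuous_intros)
  have R\<rho>: "R * \<rho> > 0" using R1 \<rho> by simp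
  define K where "K = cball xb (R * \<rho>)"
  have Kc: "compact K" "K \<noteq> {}" unfolding K_def using R\<rho> by auto
  obtain u where uK: "u \<in> K" and umin: "\<forall>y\<in>K. f u + ereal (h u) \<le> f y + ereal (h y)"
    using lsc_min[OF lsc hc Kc] by blast
  have xK: "x \<in> K" unfolding K_def using x(1) R1 \<rho> by (simp add: dist_norm norm_minus_commute)
  obtain y where fx: "f x = ereal y" using x(2) pf fxb unfolding proper_fun_def
    by (cases "f x") auto
  have y: "y - fb < \<kappa> / 2 * \<rho>\<^sup>2" using x(2) fx fxb by simp
  have hx: "h x = A * \<rho>\<^sup>2 + B * (\<rho>\<^sup>2)\<^sup>2" unfolding h_def using N2 x(1) by simp
  have "B * (\<rho>\<^sup>2)\<^sup>2 = M / 2 * \<rho>\<^sup>2" unfolding B_def using \<rho> by (simp add: power2_eq_square)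
  then have hx': "h x = - (\<kappa>' / 2) * \<rho>\<^sup>2 + M / 2 * \<rho>\<^sup>2" using hx A_def by simp
  have "\<kappa>' = \<kappa> + 2 * M" using Md by simp
  then have "\<kappa>' * \<rho>\<^sup>2 = \<kappa> * \<rho>\<^sup>2 + 2 * M * \<rho>\<^sup>2" by (simp add: algebra_simps)
  then have "y + h x < fb - M / 2 * \<rho>\<^sup>2" using y hx' by linarith
  then have ux: "f u + ereal (h u) < ereal (fb - M / 2 * \<rho>\<^sup>2)"
    using umin xK fx by (metis less_ereal.simps(1) order_le_less_trans plus_ereal.simps(1))
  obtain fu where fu: "f u = ereal fu" using ux pf unfolding proper_fun_def
    by (cases "f u") auto
  define s2 where "s2 = (norm (u - xb))\<^sup>2"
  have s2n: "s2 \<ge> 0" unfolding s2_def by simp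
  have hu: "h u = A * s2 + B * s2\<^sup>2" unfolding h_def s2_def using N2 by simp
  have ulow: "fu + h u < fb - M / 2 * \<rho>\<^sup>2" using ux fu by simp
  have unR: "norm (u - xb) \<le> R * \<rho>" using uK unfolding K_def by (simp add: dist_norm norm_minus_commute)
  have "f u \<ge> ereal (fb - r / 2 * s2)" using bound unR \<rho> unfolding s2_def by auto
  then have fulow: "fu \<ge> fb - r / 2 * s2" using fu by simp
  have B0: "B \<ge> 0" unfolding B_def using M by simp
  have star: "- (r + \<kappa>') / 2 * s2 + B * s2\<^sup>2 < - M / 2 * \<rho>\<^sup>2"
    using ulow fulow hu A_def by (simp add: field_simps)
  have "B * s2\<^sup>2 \<ge> 0" using B0 by simp
  then have "(r + \<kappa>') * s2 > M * \<rho>\<^sup>2" using star by (simp add: field_simps)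
  then have lowbd: "(\<kappa>' - \<kappa>) / (2 * (r + \<kappa>')) * \<rho>\<^sup>2 \<le> s2"
    using rk Md by (simp add: field_simps)
  have interior: "norm (u - xb) < R * \<rho>"
  proof (rule ccontr)
    assume "\<not> ?thesis"
    then have eq: "norm (u - xb) = R * \<rho>" using unR by simp
    then have s2e: "s2 = R\<^sup>2 * \<rho>\<^sup>2" unfolding s2_def by (simp add: power_mult_distrib)
    have "B * s2\<^sup>2 = (M * R\<^sup>2) * (R\<^sup>2 * \<rho>\<^sup>2) / 2"
      unfolding B_def s2e using \<rho> by (simp add: power2_eq_square field_simps)
    moreover have "(M * R\<^sup>2) * (R\<^sup>2 * \<rho>\<^sup>2) \<ge> (r + \<kappa>') * (R\<^sup>2 * \<rho>\<^sup>2)"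
      using MR2 by (intro mult_right_mono) auto
    moreover have "M * \<rho>\<^sup>2 > 0" using M \<rho> by simp
    moreover have "- (r + \<kappa>') / 2 * s2 = - ((r + \<kappa>') * (R\<^sup>2 * \<rho>\<^sup>2)) / 2"
      using s2e by (simp add: algebra_simps)
    moreover have "- M / 2 * \<rho>\<^sup>2 = - (M * \<rho>\<^sup>2) / 2" by simp
    ultimately show False using star by linarith
  qed
  define e where "e = R * \<rho> - norm (u - xb)"
  have e: "e > 0" using interior e_def by simp
  have lm: "\<forall>y. norm (y - u) < e \<longrightarrow> f u + ereal (h u) \<le> f y + ereal (h y)"
  proof (intro allI impI)
    fix y assume "norm (y - u) < e"
    then have "norm (y - xb) \<le> R * \<rho>"
      using norm_triangle_ineq[of "y - u" "u - xb"] e_def by simp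
    then have "y \<in> K" unfolding K_def by (simp add: dist_norm norm_minus_commute)
    then show "f u + ereal (h u) \<le> f y + ereal (h y)" using umin by blast
  qed
  define g where "g = (2 * A) *\<^sub>R (u - xb) + (4 * B * N u) *\<^sub>R (u - xb)"
  have hd: "(h has_derivative (\<lambda>d. inner g d)) (at u)"
    unfolding h_def N_def g_def
    apply (rule has_derivative_eq_rhs)
     apply (rule derivative_eq_intros refl | simp)+
    apply (rule ext)
    apply (simp add: inner_add_left inner_commute algebra_simps)
    done
  have vsub: "-g \<in> limiting_subdiff f u" using local_min_subgrad[OF fu hd e lm] .
  have Nu: "N u = s2" unfolding s2_def using N2 by simp
  have gform: "-g = (\<kappa>' - 4 * B * s2) *\<^sub>R (u - xb)"
    unfolding g_def A_def Nu by (simp add: algebra_simps)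
  have "inner (-g) (u - xb) = (\<kappa>' - 4 * B * s2) * s2"
    unfolding gform s2_def by (simp add: dot_square_norm)
  also have "\<dots> \<le> \<kappa>' * s2" using B0 s2n by (simp add: algebra_simps)
  finally have inn: "inner (-g) (u - xb) \<le> \<kappa>' * s2" .
  have nb: "norm (-g) \<le> (\<kappa>' * R + 2 * M * R ^ 3) * \<rho>"
  proof -
    have "norm (-g) = \<bar>\<kappa>' - 4 * B * s2\<bar> * norm (u - xb)" unfolding gform by simp
    also have "\<dots> \<le> (\<kappa>' + 4 * B * s2) * norm (u - xb)"
    proof (rule mult_right_mono)
      have "0 \<le> 4 * B * s2" using B0 s2n by simp
      then show "\<bar>\<kappa>' - 4 * B * s2\<bar> \<le> \<kappa>' + 4 * B * s2" using k by (simp add: abs_le_iff)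
    qed simp
    also have "\<dots> \<le> (\<kappa>' + 4 * B * (R\<^sup>2 * \<rho>\<^sup>2)) * (R * \<rho>)"
    proof (intro mult_mono)
      have "s2 \<le> (R * \<rho>)\<^sup>2" unfolding s2_def using unR by (intro power_mono) auto
      then have "s2 \<le> R\<^sup>2 * \<rho>\<^sup>2" by (simp add: power_mult_distrib)
      then show "\<kappa>' + 4 * B * s2 \<le> \<kappa>' + 4 * B * (R\<^sup>2 * \<rho>\<^sup>2)"
        using B0 by (simp add: mult_left_mono)
      show "norm (u - xb) \<le> R * \<rho>" by (rule unR)
      show "0 \<le> \<kappa>' + 4 * B * (R\<^sup>2 * \<rho>\<^sup>2)" using B0 k by simp
    qed simp
    also have "\<dots> = (\<kappa>' * R + 2 * M * R ^ 3) * \<rho>"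
      unfolding B_def using \<rho> by (simp add: power2_eq_square power3_eq_cube field_simps)
    finally show ?thesis .
  qed
  show ?thesis
    apply (rule exI[of _ u], rule exI[of _ "-g"])
    using vsub unR lowbd nb inn unfolding s2_def by blast
qed



lemma slm_main:
  fixes f :: "'a::euclidean_space \<Rightarrow> ereal"
  assumes pf: "proper_fun f" and lsc: "lsc_fun f" and xd: "xb \<in> effdom f"
    and prox: "0 \<in> proximal_subdiff f xb"
    and hyp: "\<forall>w \<in> sv_dom (graphical_derivative (limiting_subdiff f) xb 0).
           \<forall>z \<in> graphical_derivative (limiting_subdiff f) xb 0 w.
             inner z w \<ge> c * (norm w)\<^sup>2"
    and k: "0 < \<kappa>" "\<kappa> < c"
  shows "strong_local_min f xb \<kappa>"
proof (rule ccontr)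
  assume nslm: "\<not> strong_local_min f xb \<kappa>"
  obtain r \<delta> where r: "r > 0" and \<delta>: "\<delta> > 0"
    and bound0: "\<forall>x. norm (x - xb) \<le> \<delta> \<longrightarrow> f x \<ge> ereal (real_of_ereal (f xb) - r / 2 * (norm (x - xb))\<^sup>2)"
    using prox_bound[OF pf xd prox] by blast
  obtain fb where fxb: "f xb = ereal fb" using xd pf unfolding effdom_def proper_fun_def
    by (cases "f xb") auto
  have bound: "\<forall>x. norm (x - xb) \<le> \<delta> \<longrightarrow> f x \<ge> ereal (fb - r / 2 * (norm (x - xb))\<^sup>2)"
    using bound0 fxb by simp
  define \<kappa>' where "\<kappa>' = (\<kappa> + c) / 2"
  have k': "\<kappa> < \<kappa>'" "\<kappa>' < c" using k unfolding \<kappa>'_def by auto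
  define M where "M = (\<kappa>' - \<kappa>) / 2"
  define R where "R = (r + \<kappa>') / M + 1"
  have M: "M > 0" using k' M_def by simp
  have R: "R \<ge> 1" using M r k k' R_def by simp
  have nex: "\<forall>\<gamma>>0. \<exists>x. norm (x - xb) \<le> \<gamma> \<and> f x - f xb < ereal (\<kappa> / 2 * (norm (x - xb))\<^sup>2)"
    using nslm xd k unfolding strong_local_min_def by (auto simp: not_le)
  define \<gamma> where "\<gamma> = (\<lambda>k::nat. \<delta> / R * inverse (real (Suc k)))"
  have \<gamma>pos: "\<gamma> k > 0" for k using \<delta> R unfolding \<gamma>_def by simp
  have \<gamma>0: "\<gamma> \<longlonglongrightarrow> 0" unfolding \<gamma>_def
    using tendsto_mult_right_zero[OF LIMSEQ_inverse_real_of_nat, of "\<delta> / R"] by simp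
  have \<gamma>le: "R * \<gamma> k \<le> \<delta>" for k
  proof -
    have "inverse (real (Suc k)) \<le> 1" by (rule inverse_le_1_iff[THEN iffD2]) simp
    then have "\<delta> * inverse (real (Suc k)) \<le> \<delta>" using \<delta> by (simp add: mult_left_le)
    then show ?thesis unfolding \<gamma>_def using R by simp
  qed
  obtain X where X: "\<And>k. norm (X k - xb) \<le> \<gamma> k \<and> f (X k) - f xb < ereal (\<kappa> / 2 * (norm (X k - xb))\<^sup>2)"
  proof -
    have "\<forall>k. \<exists>x. norm (x - xb) \<le> \<gamma> k \<and> f x - f xb < ereal (\<kappa> / 2 * (norm (x - xb))\<^sup>2)"
      using nex \<gamma>pos by blast
    then show ?thesis using that by metis
  qed
  define \<rho> where "\<rho> = (\<lambda>k. norm (X k - xb))"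
  have \<rho>pos: "\<rho> k > 0" for k
  proof (rule ccontr)
    assume "\<not> \<rho> k > 0"
    then have "X k = xb" unfolding \<rho>_def by simp
    then show False using X[of k] fxb by simp
  qed
  have \<rho>le: "R * \<rho> k \<le> \<delta>" for k
    using X[of k] \<gamma>le[of k] R unfolding \<rho>_def by (meson less_le_trans mult_left_mono not_le zero_le_one)
  have \<rho>0: "\<rho> \<longlonglongrightarrow> 0"
    by (rule tendsto_sandwich[OF _ _ tendsto_const \<gamma>0]) (use \<rho>pos X in \<open>auto simp: \<rho>_def less_imp_le\<close>)
  define m0 where "m0 = (\<kappa>' - \<kappa>) / (2 * (r + \<kappa>'))"
  define Cv where "Cv = \<kappa>' * R + 2 * M * R ^ 3"
  have "\<forall>k. \<exists>u v. v \<in> limiting_subdiff f u \<and> norm (u - xb) \<le> R * \<rho> k \<and>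
     m0 * (\<rho> k)\<^sup>2 \<le> (norm (u - xb))\<^sup>2 \<and> norm v \<le> Cv * \<rho> k \<and>
     inner v (u - xb) \<le> \<kappa>' * (norm (u - xb))\<^sup>2"
  proof
    fix k
    show "\<exists>u v. v \<in> limiting_subdiff f u \<and> norm (u - xb) \<le> R * \<rho> k \<and>
     m0 * (\<rho> k)\<^sup>2 \<le> (norm (u - xb))\<^sup>2 \<and> norm v \<le> Cv * \<rho> k \<and>
     inner v (u - xb) \<le> \<kappa>' * (norm (u - xb))\<^sup>2"
      unfolding m0_def Cv_def
      by (rule step[OF pf lsc fxb bound r k(1) k'(1) M_def R_def \<rho>pos \<rho>le]) (use X in \<open>auto simp: \<rho>_def\<close>)
  qed
  then obtain U V where UV: "\<And>k. V k \<in> limiting_subdiff f (U k) \<and> norm (U k - xb) \<le> R * \<rho> k \<and>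
     m0 * (\<rho> k)\<^sup>2 \<le> (norm (U k - xb))\<^sup>2 \<and> norm (V k) \<le> Cv * \<rho> k \<and>
     inner (V k) (U k - xb) \<le> \<kappa>' * (norm (U k - xb))\<^sup>2"
    by metis
  define W where "W = (\<lambda>k. inverse (\<rho> k) *\<^sub>R (U k - xb))"
  define Z where "Z = (\<lambda>k. inverse (\<rho> k) *\<^sub>R V k)"
  have Wb: "norm (W k) \<le> R" for k
  proof -
    have "norm (W k) = inverse (\<rho> k) * norm (U k - xb)" unfolding W_def norm_scaleR using \<rho>pos[of k] by simp
    also have "\<dots> = norm (U k - xb) / \<rho> k" by (simp add: divide_inverse mult.commute)
    also have "\<dots> \<le> R" using UV[of k] \<rho>pos[of k] by (simp add: divide_le_eq)
    finally show ?thesis .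
  qed
  have Zb: "norm (Z k) \<le> Cv" for k
  proof -
    have "norm (Z k) = inverse (\<rho> k) * norm (V k)" unfolding Z_def norm_scaleR using \<rho>pos[of k] by simp
    also have "\<dots> = norm (V k) / \<rho> k" by (simp add: divide_inverse mult.commute)
    also have "\<dots> \<le> Cv" using UV[of k] \<rho>pos[of k] by (simp add: divide_le_eq)
    finally show ?thesis .
  qed
  have Wl: "m0 \<le> (norm (W k))\<^sup>2" for k
  proof -
    have "norm (W k) = inverse (\<rho> k) * norm (U k - xb)" unfolding W_def norm_scaleR using \<rho>pos[of k] by simp
    then have "(norm (W k))\<^sup>2 = (norm (U k - xb))\<^sup>2 / (\<rho> k)\<^sup>2"
      by (simp add: power_mult_distrib divide_inverse power_inverse mult.commute)
    also have "m0 \<le> \<dots>" using UV[of k] \<rho>pos[of k] by (simp add: le_divide_eq)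
    finally show ?thesis .
  qed
  have Wsq: "(norm (W k))\<^sup>2 = (norm (U k - xb))\<^sup>2 / (\<rho> k)\<^sup>2" for k
  proof -
    have "norm (W k) = inverse (\<rho> k) * norm (U k - xb)" unfolding W_def norm_scaleR using \<rho>pos[of k] by simp
    then show ?thesis
      by (simp add: power_mult_distrib divide_inverse power_inverse mult.commute)
  qed
  have ZW: "inner (Z k) (W k) \<le> \<kappa>' * (norm (W k))\<^sup>2" for k
  proof -
    have "inner (Z k) (W k) = inverse (\<rho> k) * inverse (\<rho> k) * inner (V k) (U k - xb)"
      unfolding W_def Z_def inner_scaleR_left inner_scaleR_right by simp
    also have "\<dots> = inner (V k) (U k - xb) / (\<rho> k)\<^sup>2"
      by (simp add: power2_eq_square divide_inverse mult.commute)
    also have "\<dots> \<le> \<kappa>' * (norm (U k - xb))\<^sup>2 / (\<rho> k)\<^sup>2" using UV[of k] \<rho>pos[of k]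
      by (simp add: divide_right_mono)
    also have "\<dots> = \<kappa>' * (norm (W k))\<^sup>2"
      using Wsq[of k] by simp
    finally show ?thesis .
  qed
  define P where "P = (\<lambda>k. (W k, Z k))"
  have "bounded (range P)"
  proof (rule bounded_subset)
    show "bounded (cball 0 R \<times> cball 0 Cv)" by (intro bounded_Times bounded_cball)
    show "range P \<subseteq> cball 0 R \<times> cball 0 Cv" using Wb Zb unfolding P_def by auto
  qed
  then obtain l \<sigma> where \<sigma>: "strict_mono \<sigma>" and Pl: "(P \<circ> \<sigma>) \<longlonglongrightarrow> l"
    using bounded_imp_convergent_subsequence by blast
  obtain w z where l: "l = (w, z)" by (cases l)
  have Wl': "(\<lambda>k. W (\<sigma> k)) \<longlonglongrightarrow> w" using tendsto_fst[OF Pl] l unfolding P_def by (simp add: o_def)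
  have Zl': "(\<lambda>k. Z (\<sigma> k)) \<longlonglongrightarrow> z" using tendsto_snd[OF Pl] l unfolding P_def by (simp add: o_def)
  have tan: "(w, z) \<in> tangent_cone (graph_of (limiting_subdiff f)) (xb, 0)"
    unfolding tangent_cone_def
  proof (intro CollectI exI conjI allI)
    show "(\<rho> \<circ> \<sigma>) \<longlonglongrightarrow> 0" using LIMSEQ_subseq_LIMSEQ[OF \<rho>0 \<sigma>] .
    show "(P \<circ> \<sigma>) \<longlonglongrightarrow> (w, z)" using Pl l by simp
    fix k
    show "(\<rho> \<circ> \<sigma>) k > 0" using \<rho>pos by simp
    have "(xb, 0) + (\<rho> \<circ> \<sigma>) k *\<^sub>R (P \<circ> \<sigma>) k = (U (\<sigma> k), V (\<sigma> k))"
      unfolding P_def W_def Z_def using \<rho>pos[of "\<sigma> k"] by simp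
    then show "(xb, 0) + (\<rho> \<circ> \<sigma>) k *\<^sub>R (P \<circ> \<sigma>) k \<in> graph_of (limiting_subdiff f)"
      using UV[of "\<sigma> k"] unfolding graph_of_def by simp
  qed
  then have zin: "z \<in> graphical_derivative (limiting_subdiff f) xb 0 w"
    unfolding graphical_derivative_def by simp
  then have win: "w \<in> sv_dom (graphical_derivative (limiting_subdiff f) xb 0)"
    unfolding sv_dom_def by auto
  have hz: "inner z w \<ge> c * (norm w)\<^sup>2" using hyp zin win by blast
  have l1: "(\<lambda>k. inner (Z (\<sigma> k)) (W (\<sigma> k))) \<longlonglongrightarrow> inner z w" by (intro tendsto_intros Wl' Zl')
  have l2: "(\<lambda>k. \<kappa>' * (norm (W (\<sigma> k)))\<^sup>2) \<longlonglongrightarrow> \<kappa>' * (norm w)\<^sup>2" by (intro tendsto_intros Wl')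
  have l3: "(\<lambda>k. (norm (W (\<sigma> k)))\<^sup>2) \<longlonglongrightarrow> (norm w)\<^sup>2" by (intro tendsto_intros Wl')
  have "inner z w \<le> \<kappa>' * (norm w)\<^sup>2"
    using LIMSEQ_le[OF l1 l2] ZW by blast
  moreover have "m0 \<le> (norm w)\<^sup>2" using LIMSEQ_le_const[OF l3] Wl by blast
  moreover have "m0 > 0" unfolding m0_def using k' r k by simp
  ultimately have "c * (norm w)\<^sup>2 \<le> \<kappa>' * (norm w)\<^sup>2" "(norm w)\<^sup>2 > 0" using hz by auto
  then show False using k' by simp
qed



theorem theorem3p2:
  fixes f :: "real ^ 'n \<Rightarrow> ereal" and xb :: "real ^ 'n" and c :: real
  assumes "proper_fun f" and "lsc_fun f" and "xb \<in> effdom f"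
    and "0 \<in> proximal_subdiff f xb"
    and "c > 0"
    and "\<forall>w \<in> sv_dom (graphical_derivative (limiting_subdiff f) xb 0).
           \<forall>z \<in> graphical_derivative (limiting_subdiff f) xb 0 w.
             inner z w \<ge> c * (norm w)\<^sup>2"
  shows "(\<forall>\<kappa>. 0 < \<kappa> \<and> \<kappa> < c \<longrightarrow> strong_local_min f xb \<kappa>) \<and>
         QG f xb \<ge> Inf {q. \<exists>w z. w \<in> sv_dom (graphical_derivative (limiting_subdiff f) xb 0) \<and>
              z \<in> graphical_derivative (limiting_subdiff f) xb 0 w \<and>
              q = (if w = 0 then \<infinity> else ereal (inner z w / (norm w)\<^sup>2))}"
proof
  note pf = assms(1) and lsc = assms(2) and xd = assms(3) and prox = assms(4)
  show "\<forall>\<kappa>. 0 < \<kappa> \<and> \<kappa> < c \<longrightarrow> strong_local_min f xb \<kappa>"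
    using slm_main[OF pf lsc xd prox assms(6)] by blast
  define D where "D = graphical_derivative (limiting_subdiff f) xb 0"
  define S where "S = {q. \<exists>w z. w \<in> sv_dom D \<and> z \<in> D w \<and>
              q = (if w = 0 then \<infinity> else ereal (inner z w / (norm w)\<^sup>2))}"
  have key: "ereal \<kappa> \<le> QG f xb" if k0: "0 < \<kappa>" and kS: "ereal \<kappa> < Inf S" for \<kappa>
  proof -
    obtain c' where c': "ereal \<kappa> < ereal c'" "ereal c' < Inf S" using ereal_dense2[OF kS] by blast
    have hyp: "\<forall>w \<in> sv_dom D. \<forall>z \<in> D w. inner z w \<ge> c' * (norm w)\<^sup>2"
    proof (intro ballI)
      fix w z assume w: "w \<in> sv_dom D" and z: "z \<in> D w"
      show "inner z w \<ge> c' * (norm w)\<^sup>2"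
      proof (cases "w = 0")
        case True then show ?thesis by simp
      next
        case False
        have "ereal (inner z w / (norm w)\<^sup>2) \<in> S" unfolding S_def using w z False by (intro CollectI exI[of _ w] exI[of _ z]) simp
        then have "Inf S \<le> ereal (inner z w / (norm w)\<^sup>2)" by (rule Inf_lower)
        with c'(2) have "ereal c' < ereal (inner z w / (norm w)\<^sup>2)" by (rule order_less_le_trans)
        then have "c' < inner z w / (norm w)\<^sup>2" by simp
        then show ?thesis using False by (simp add: field_simps)
      qed
    qed
    have "strong_local_min f xb \<kappa>"
      using slm_main[OF pf lsc xd prox hyp[unfolded D_def], of \<kappa>] k0 c' by simp
    then show ?thesis unfolding QG_def using k0 by (intro Sup_upper) auto
  qed
  have Sc: "ereal c \<le> Inf S"
  proof (rule Inf_greatest)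
    fix q assume "q \<in> S"
    then obtain w z where w: "w \<in> sv_dom D" "z \<in> D w"
      and q: "q = (if w = 0 then \<infinity> else ereal (inner z w / (norm w)\<^sup>2))"
      unfolding S_def by blast
    show "ereal c \<le> q"
    proof (cases "w = 0")
      case False
      have "inner z w \<ge> c * (norm w)\<^sup>2" using assms(6) w unfolding D_def by blast
      then have "c \<le> inner z w / (norm w)\<^sup>2" using False by (simp add: field_simps)
      then show ?thesis using q False by simp
    qed (use q in simp)
  qed
  show "QG f xb \<ge> Inf {q. \<exists>w z. w \<in> sv_dom (graphical_derivative (limiting_subdiff f) xb 0) \<and>
              z \<in> graphical_derivative (limiting_subdiff f) xb 0 w \<and>
              q = (if w = 0 then \<infinity> else ereal (inner z w / (norm w)\<^sup>2))}"
    unfolding D_def[symmetric] S_def[symmetric]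
  proof (rule ccontr)
    assume "\<not> Inf S \<le> QG f xb"
    then have lt: "QG f xb < Inf S" by simp
    have "(0::ereal) < ereal c" using assms(5) by simp
    then have "0 < Inf S" using Sc by (rule order_less_le_trans)
    then have "max (QG f xb) 0 < Inf S" using lt by simp
    then obtain y where y: "max (QG f xb) 0 < ereal y" "ereal y < Inf S" using ereal_dense2 by blast
    then have "0 < y" "QG f xb < ereal y" by auto
    with key[OF \<open>0 < y\<close> y(2)] show False by simp
  qed
qed


end
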